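(* Let $F$ be a field and let $R$ be an $F$-algebra generated (as an $F$-algebra) by two principally nilpotent elements $x,y$ such that $x+y$ is not nilpotent. Then $R$ is a local ring satisfying (NK), and its Jacobson radical satisfies $\mathcal J(R)=xR+yR=Rx+Ry$.
   Context: All rings are associative with unit. A right ideal is nil if all its elements are nilpotent. A ring satisfies the condition (NK) if it contains two nil right ideals whose sum is not nil. An element $a$ of a ring $R$ is principally nilpotent if $aR$ is a nil right ideal. A ring is local if it has a unique maximal right ideal. *)

theory Defs
  imports Main "HOL.Modules"
begin

text \<open>Rings are modelled by the type class ring_1 (associative, with unit); the whole
type is the ring R.\<close>

definition is_F_algebra :: "('k::field \<Rightarrow> 'a::ring_1 \<Rightarrow> 'a) \<Rightarrow> bool" where
  "is_F_algebra sc \<longleftrightarrow> module sc \<and>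
     (\<forall>c a b. sc c (a * b) = sc c a * b \<and> sc c (a * b) = a * sc c b)"

definition subalg_gen :: "('k::field \<Rightarrow> 'a::ring_1 \<Rightarrow> 'a) \<Rightarrow> 'a set \<Rightarrow> 'a set" where
  "subalg_gen sc S = \<Inter>{T. S \<subseteq> T \<and> 1 \<in> T \<and> (\<forall>a\<in>T. \<forall>b\<in>T. a + b \<in> T \<and> a * b \<in> T)
                          \<and> (\<forall>c. \<forall>a\<in>T. sc c a \<in> T)}"

definition nilpotent_el :: "'a::ring_1 \<Rightarrow> bool" where
  "nilpotent_el a \<longleftrightarrow> (\<exists>n. a ^ n = 0)"

definition right_ideal :: "'a::ring_1 set \<Rightarrow> bool" where
  "right_ideal I \<longleftrightarrow> 0 \<in> I \<and> (\<forall>a\<in>I. \<forall>b\<in>I. a + b \<in> I) \<and> (\<forall>a\<in>I. - a \<in> I)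
                    \<and> (\<forall>a\<in>I. \<forall>r. a * r \<in> I)"

definition nil_set :: "'a::ring_1 set \<Rightarrow> bool" where
  "nil_set I \<longleftrightarrow> (\<forall>a\<in>I. nilpotent_el a)"

definition nil_right_ideal :: "'a::ring_1 set \<Rightarrow> bool" where
  "nil_right_ideal I \<longleftrightarrow> right_ideal I \<and> nil_set I"

definition set_plus :: "'a::ring_1 set \<Rightarrow> 'a set \<Rightarrow> 'a set" where
  "set_plus I J = {a + b | a b. a \<in> I \<and> b \<in> J}"

definition NK :: "'a::ring_1 itself \<Rightarrow> bool" where
  "NK _ \<longleftrightarrow> (\<exists>I J :: 'a set. nil_right_ideal I \<and> nil_right_ideal J \<and> \<not> nil_set (set_plus I J))"

definition principally_nilpotent :: "'a::ring_1 \<Rightarrow> bool" where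
  "principally_nilpotent a \<longleftrightarrow> nil_right_ideal (range (\<lambda>r. a * r))"

definition maximal_right_ideal :: "'a::ring_1 set \<Rightarrow> bool" where
  "maximal_right_ideal M \<longleftrightarrow> right_ideal M \<and> M \<noteq> UNIV \<and>
     (\<forall>I. right_ideal I \<and> M \<subseteq> I \<longrightarrow> I = M \<or> I = UNIV)"

definition local_ring :: "'a::ring_1 itself \<Rightarrow> bool" where
  "local_ring _ \<longleftrightarrow> (\<exists>!M :: 'a set. maximal_right_ideal M)"

definition jacobson :: "'a::ring_1 itself \<Rightarrow> 'a set" where
  "jacobson _ = \<Inter>{M :: 'a set. maximal_right_ideal M}"

end

theory Submission
  imports Defs
begin

lemma geom_unit:
  fixes u :: "'a::ring_1"
  shows "(1 - u) * (\<Sum>i<n. u ^ i) = 1 - u ^ n"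
proof (induction n)
  case 0 then show ?case by simp
next
  case (Suc n)
  have "(1 - u) * (\<Sum>i<Suc n. u ^ i) = (1 - u) * (\<Sum>i<n. u ^ i) + (1 - u) * u ^ n"
    by (simp add: distrib_left)
  also have "\<dots> = 1 - u ^ n + (u ^ n - u ^ Suc n)"
    using Suc by (simp add: algebra_simps)
  finally show ?case by simp
qed

lemma nil_unit:
  fixes u :: "'a::ring_1"
  assumes "nilpotent_el u"
  shows "\<exists>s. (1 - u) * s = 1"
proof -
  from assms obtain n where "u ^ n = 0" unfolding nilpotent_el_def by auto
  then show ?thesis using geom_unit[of u n] by auto
qed

lemma alg_facts:
  assumes "is_F_algebra sc"
  shows "module sc" "\<And>c a b. sc c (a*b) = sc c a * b" "\<And>c a b. sc c (a*b) = a * sc c b"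
  using assms unfolding is_F_algebra_def by metis+

lemma decomp_right:
  fixes sc :: "'k::field \<Rightarrow> 'a::ring_1 \<Rightarrow> 'a"
  assumes alg: "is_F_algebra sc" and gen: "subalg_gen sc {x, y} = UNIV"
  shows "\<exists>c a b. z = sc c 1 + (x*a + y*b)"
proof -
  note sl = alg_facts(2)[OF alg] and sr = alg_facts(3)[OF alg]
  interpret module sc by (rule alg_facts(1)[OF alg])
  define T where "T = {sc c 1 + (x*a + y*b) | c a b. True}"
  have xT: "x \<in> T" unfolding T_def by (rule CollectI, rule exI[of _ 0], rule exI[of _ 1], rule exI[of _ 0]) simp
  have yT: "y \<in> T" unfolding T_def by (rule CollectI, rule exI[of _ 0], rule exI[of _ 0], rule exI[of _ 1]) simp
  have oT: "1 \<in> T" unfolding T_def by (rule CollectI, rule exI[of _ 1], rule exI[of _ 0], rule exI[of _ 0]) simp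
  have addT: "u + v \<in> T" if "u \<in> T" "v \<in> T" for u v
  proof -
    from that obtain c a b d a' b' where u: "u = sc c 1 + (x*a + y*b)" and v: "v = sc d 1 + (x*a' + y*b')"
      unfolding T_def by auto
    have "u + v = sc (c + d) 1 + (x*(a+a') + y*(b+b'))"
      unfolding u v by (simp add: algebra_simps scale_left_distrib)
    then show ?thesis unfolding T_def by blast
  qed
  have mulT: "u * v \<in> T" if "u \<in> T" "v \<in> T" for u v
  proof -
    from that obtain c a b d a' b' where u: "u = sc c 1 + (x*a + y*b)" and v: "v = sc d 1 + (x*a' + y*b')"
      unfolding T_def by auto
    have e1: "sc c 1 * v = sc c v" using sl[of c 1 v] by simp
    have e2: "sc c v = sc (c*d) 1 + (x * sc c a' + y * sc c b')"
      unfolding v by (simp add: scale_right_distrib sr[symmetric])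
    have "u * v = sc c 1 * v + (x*a + y*b) * v" unfolding u by (simp add: distrib_right)
    also have "\<dots> = sc (c*d) 1 + (x*(sc c a' + a*v) + y*(sc c b' + b*v))"
      using e1 e2 by (simp add: algebra_simps)
    finally show ?thesis unfolding T_def by blast
  qed
  have scT: "sc k u \<in> T" if "u \<in> T" for k u
  proof -
    from that obtain c a b where u: "u = sc c 1 + (x*a + y*b)"
      unfolding T_def by auto
    have "sc k u = sc (k*c) 1 + (x*sc k a + y*sc k b)"
      unfolding u by (simp add: scale_right_distrib sr[symmetric])
    then show ?thesis unfolding T_def by blast
  qed
  have "subalg_gen sc {x, y} \<subseteq> T"
    unfolding subalg_gen_def
    by (rule Inter_lower) (use xT yT oT addT mulT scT in blast)
  with gen have "z \<in> T" by auto
  then show ?thesis unfolding T_def by blast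
qed

lemma decomp_left:
  fixes sc :: "'k::field \<Rightarrow> 'a::ring_1 \<Rightarrow> 'a"
  assumes alg: "is_F_algebra sc" and gen: "subalg_gen sc {x, y} = UNIV"
  shows "\<exists>c a b. z = sc c 1 + (a*x + b*y)"
proof -
  note sl = alg_facts(2)[OF alg] and sr = alg_facts(3)[OF alg]
  interpret module sc by (rule alg_facts(1)[OF alg])
  define T where "T = {sc c 1 + (a*x + b*y) | c a b. True}"
  have xT: "x \<in> T" unfolding T_def by (rule CollectI, rule exI[of _ 0], rule exI[of _ 1], rule exI[of _ 0]) simp
  have yT: "y \<in> T" unfolding T_def by (rule CollectI, rule exI[of _ 0], rule exI[of _ 0], rule exI[of _ 1]) simp
  have oT: "1 \<in> T" unfolding T_def by (rule CollectI, rule exI[of _ 1], rule exI[of _ 0], rule exI[of _ 0]) simp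
  have addT: "u + v \<in> T" if "u \<in> T" "v \<in> T" for u v
  proof -
    from that obtain c a b d a' b' where u: "u = sc c 1 + (a*x + b*y)" and v: "v = sc d 1 + (a'*x + b'*y)"
      unfolding T_def by auto
    have "u + v = sc (c + d) 1 + ((a+a')*x + (b+b')*y)"
      unfolding u v by (simp add: algebra_simps scale_left_distrib)
    then show ?thesis unfolding T_def by blast
  qed
  have mulT: "u * v \<in> T" if "u \<in> T" "v \<in> T" for u v
  proof -
    from that obtain c a b d a' b' where u: "u = sc c 1 + (a*x + b*y)" and v: "v = sc d 1 + (a'*x + b'*y)"
      unfolding T_def by auto
    have e1: "u * sc d 1 = sc d u" using sr[of d u 1] by simp
    have e2: "sc d u = sc (d*c) 1 + (sc d a * x + sc d b * y)"
      unfolding u by (simp add: scale_right_distrib sl[symmetric])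
    have "u * v = u * sc d 1 + u * (a'*x + b'*y)" unfolding v by (simp add: distrib_left)
    also have "\<dots> = sc (d*c) 1 + ((sc d a + u*a')*x + (sc d b + u*b')*y)"
      using e1 e2 by (simp add: algebra_simps)
    finally show ?thesis unfolding T_def by blast
  qed
  have scT: "sc k u \<in> T" if "u \<in> T" for k u
  proof -
    from that obtain c a b where u: "u = sc c 1 + (a*x + b*y)"
      unfolding T_def by auto
    have "sc k u = sc (k*c) 1 + (sc k a * x + sc k b * y)"
      unfolding u by (simp add: scale_right_distrib sl[symmetric])
    then show ?thesis unfolding T_def by blast
  qed
  have "subalg_gen sc {x, y} \<subseteq> T"
    unfolding subalg_gen_def
    by (rule Inter_lower) (use xT yT oT addT mulT scT in blast)
  with gen have "z \<in> T" by auto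
  then show ?thesis unfolding T_def by blast
qed


lemma nil_in_max:
  fixes a :: "'a::ring_1"
  assumes mx: "maximal_right_ideal Mx" and nil: "\<And>r. nilpotent_el (a * r)"
  shows "a \<in> Mx"
proof (rule ccontr)
  assume na: "a \<notin> Mx"
  have ri: "right_ideal Mx" and ne: "Mx \<noteq> UNIV"
    and mx3: "\<And>I. right_ideal I \<Longrightarrow> Mx \<subseteq> I \<Longrightarrow> I = Mx \<or> I = UNIV"
    using mx unfolding maximal_right_ideal_def by auto
  define I where "I = {m + a * r | m r. m \<in> Mx}"
  have riI: "right_ideal I" unfolding right_ideal_def
  proof (intro conjI ballI allI)
    show "0 \<in> I" unfolding I_def using ri unfolding right_ideal_def
      by (auto intro!: exI[of _ 0])
  next
    fix u v assume "u \<in> I" "v \<in> I"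
    then obtain m r m' r' where "u = m + a*r" "v = m' + a*r'" "m \<in> Mx" "m' \<in> Mx"
      unfolding I_def by auto
    moreover have "u + v = (m + m') + a*(r + r')" using calculation by (simp add: algebra_simps)
    ultimately show "u + v \<in> I" unfolding I_def using ri unfolding right_ideal_def by blast
  next
    fix u assume "u \<in> I"
    then obtain m r where "u = m + a*r" "m \<in> Mx" unfolding I_def by auto
    moreover have "- u = (- m) + a*(- r)" using calculation by (simp add: algebra_simps)
    ultimately show "- u \<in> I" unfolding I_def using ri unfolding right_ideal_def by blast
  next
    fix u s assume "u \<in> I"
    then obtain m r where "u = m + a*r" "m \<in> Mx" unfolding I_def by auto
    moreover have "u * s = m * s + a*(r * s)" using calculation by (simp add: algebra_simps)
    ultimately show "u * s \<in> I" unfolding I_def using ri unfolding right_ideal_def by blast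
  qed
  have sub: "Mx \<subseteq> I" unfolding I_def by (force intro: exI[of _ 0])
  have "0 \<in> Mx" using ri unfolding right_ideal_def by blast
  then have "0 + a * 1 \<in> I" unfolding I_def by blast
  then have "a \<in> I" by simp
  with na mx3[OF riI sub] have "I = UNIV" by auto
  then have "1 \<in> I" by auto
  then obtain m r where m: "1 = m + a*r" "m \<in> Mx" unfolding I_def by auto
  obtain s where s: "(1 - a*r) * s = 1" using nil_unit[OF nil[of r]] by auto
  have "m = 1 - a*r" using m(1) by (simp add: algebra_simps)
  moreover have "m * s \<in> Mx" using ri m(2) unfolding right_ideal_def by blast
  ultimately have "1 \<in> Mx" using s by simp
  then have "\<forall>z. 1 * z \<in> Mx" using ri unfolding right_ideal_def by blast
  then have "Mx = UNIV" by auto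
  with ne show False by simp
qed

lemma pn_nil: "principally_nilpotent x \<Longrightarrow> nilpotent_el (x * r)"
  unfolding principally_nilpotent_def nil_right_ideal_def nil_set_def by auto

theorem mainTheorem5:
  fixes sc :: "'k::field \<Rightarrow> 'a::ring_1 \<Rightarrow> 'a" and x y :: 'a
  assumes "is_F_algebra sc"
    and "subalg_gen sc {x, y} = UNIV"
    and "principally_nilpotent x" and "principally_nilpotent y"
    and "\<not> nilpotent_el (x + y)"
  shows "local_ring TYPE('a) \<and> NK TYPE('a)
    \<and> jacobson TYPE('a) = {x * r + y * s | r s. True}
    \<and> {x * r + y * s | r s. True} = {r * x + s * y | r s. True}"
proof -
  note alg = assms(1) and gen = assms(2) and px = assms(3) and py = assms(4) and nxy = assms(5)
  note sl = alg_facts(2)[OF alg] and sr = alg_facts(3)[OF alg]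
  interpret module sc by (rule alg_facts(1)[OF alg])
  define M where "M = {x * r + y * s | r s. True}"
  define L where "L = {r * x + s * y | r s. True}"
  have LM: "L \<subseteq> M"
  proof
    fix z assume "z \<in> L"
    then obtain r s where z: "z = r*x + s*y" unfolding L_def by auto
    obtain c a b where r: "r = sc c 1 + (x*a + y*b)" using decomp_right[OF alg gen] by blast
    obtain d a' b' where s: "s = sc d 1 + (x*a' + y*b')" using decomp_right[OF alg gen] by blast
    have e1: "sc c 1 * x = x * sc c 1" using sl[of c 1 x] sr[of c x 1] by simp
    have "z = x * (sc c 1 + a * x + a' * y) + y * (b * x + sc d 1 + b' * y)"
      unfolding z using e1 sl[of d 1 y] sr[of d y 1] unfolding r s by (simp add: algebra_simps)
    then show "z \<in> M" unfolding M_def by blast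
  qed
  have MsubL: "M \<subseteq> L"
  proof
    fix z assume "z \<in> M"
    then obtain r s where z: "z = x*r + y*s" unfolding M_def by auto
    obtain c a b where r: "r = sc c 1 + (a*x + b*y)" using decomp_left[OF alg gen] by blast
    obtain d a' b' where s: "s = sc d 1 + (a'*x + b'*y)" using decomp_left[OF alg gen] by blast
    have "z = (sc c 1 + x * a + y * a') * x + (x * b + sc d 1 + y * b') * y"
      unfolding z using sl[of c 1 x] sr[of c x 1] sl[of d 1 y] sr[of d y 1]
      unfolding r s by (simp add: algebra_simps)
    then show "z \<in> L" unfolding L_def by blast
  qed
  have nontriv: "(1::'a) \<noteq> 0"
  proof
    assume "(1::'a) = 0"
    then have "x + y = 0" by (metis mult_1_right mult_zero_right)
    then have "(x+y)^1 = 0" by simp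
    with nxy show False unfolding nilpotent_el_def by blast
  qed
  have one_notin: "1 \<notin> M"
  proof
    assume "1 \<in> M"
    then obtain a b where ab: "1 = x*a + y*b" unfolding M_def by auto
    obtain s where s: "(1 - x*a) * s = 1" using nil_unit[OF pn_nil[OF px]] by blast
    have "y * (b * s) = 1" using s ab by (metis add_diff_cancel_left' mult.assoc)
    moreover obtain n where "(y * (b*s))^n = 0" using pn_nil[OF py] unfolding nilpotent_el_def by blast
    ultimately show False using nontriv by simp
  qed
  have riM: "right_ideal M" unfolding right_ideal_def M_def
  proof (intro conjI ballI allI)
    show "0 \<in> {x * r + y * s |r s. True}" by (auto intro!: exI[of _ 0])
  next
    fix u v assume "u \<in> {x * r + y * s |r s. True}" "v \<in> {x * r + y * s |r s. True}"
    then obtain r s r' s' where "u = x*r + y*s" "v = x*r' + y*s'" by auto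
    then have "u + v = x*(r+r') + y*(s+s')" by (simp add: algebra_simps)
    then show "u + v \<in> {x * r + y * s |r s. True}" by blast
  next
    fix u assume "u \<in> {x * r + y * s |r s. True}"
    then obtain r s where "u = x*r + y*s" by auto
    then have "- u = x*(-r) + y*(-s)" by (simp add: algebra_simps)
    then show "- u \<in> {x * r + y * s |r s. True}" by blast
  next
    fix u t assume "u \<in> {x * r + y * s |r s. True}"
    then obtain r s where "u = x*r + y*s" by auto
    then have "u * t = x*(r*t) + y*(s*t)" by (simp add: algebra_simps)
    then show "u * t \<in> {x * r + y * s |r s. True}" by blast
  qed
  have maxM: "maximal_right_ideal M"
    unfolding maximal_right_ideal_def
  proof (intro conjI allI impI)
    show "right_ideal M" by (rule riM)
    show "M \<noteq> UNIV" using one_notin by auto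
  next
    fix I :: "'a set" assume h: "right_ideal I \<and> M \<subseteq> I"
    show "I = M \<or> I = UNIV"
    proof (cases "I \<subseteq> M")
      case True with h show ?thesis by auto
    next
      case False
      then obtain z where zI: "z \<in> I" and zM: "z \<notin> M" by auto
      obtain c a b where z: "z = sc c 1 + (x*a + y*b)" using decomp_right[OF alg gen] by blast
      have mM: "x*a + y*b \<in> M" unfolding M_def by blast
      have c0: "c \<noteq> 0" using zM mM z by auto
      have "- (x*a + y*b) \<in> I" using h mM unfolding right_ideal_def by blast
      then have "z + - (x*a + y*b) \<in> I" using h zI unfolding right_ideal_def by blast
      then have scI: "sc c 1 \<in> I" using z by simp
      have "sc c 1 * sc (inverse c) 1 = 1"
        using sl[of c 1 "sc (inverse c) 1"] c0 by simp
      then have "1 \<in> I" using scI h unfolding right_ideal_def by metis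
      then have "\<forall>t. 1 * t \<in> I" using h unfolding right_ideal_def by blast
      then show ?thesis by auto
    qed
  qed
  have allmax: "Mx = M" if "maximal_right_ideal Mx" for Mx :: "'a set"
  proof -
    have ri: "right_ideal Mx" and ne: "Mx \<noteq> UNIV" using that unfolding maximal_right_ideal_def by auto
    have "M \<subseteq> Mx"
    proof
      fix z assume "z \<in> M"
      then obtain r s where z: "z = x*r + y*s" unfolding M_def by auto
      have "x*r \<in> Mx" by (rule nil_in_max[OF that]) (metis pn_nil[OF px] mult.assoc)
      moreover have "y*s \<in> Mx" by (rule nil_in_max[OF that]) (metis pn_nil[OF py] mult.assoc)
      ultimately show "z \<in> Mx" using ri z unfolding right_ideal_def by blast
    qed
    with maxM ri ne show ?thesis unfolding maximal_right_ideal_def by blast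
  qed
  have loc: "local_ring TYPE('a)" unfolding local_ring_def using maxM allmax by blast
  have jac: "jacobson TYPE('a) = M"
  proof -
    have "{Mx :: 'a set. maximal_right_ideal Mx} = {M}" using maxM allmax by blast
    then show ?thesis unfolding jacobson_def by simp
  qed
  have nk: "NK TYPE('a)"
    unfolding NK_def
  proof (intro exI conjI)
    show "nil_right_ideal (range (\<lambda>r. x * r))" using px unfolding principally_nilpotent_def .
    show "nil_right_ideal (range (\<lambda>r. y * r))" using py unfolding principally_nilpotent_def .
    have "x * 1 + y * 1 \<in> set_plus (range (\<lambda>r. x * r)) (range (\<lambda>r. y * r))"
      unfolding set_plus_def by blast
    then show "\<not> nil_set (set_plus (range (\<lambda>r. x * r)) (range (\<lambda>r. y * r)))"
      using nxy unfolding nil_set_def by auto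
  qed
  show ?thesis using loc nk jac LM MsubL unfolding M_def L_def by blast
qed

end
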